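(* Let $S=(s_{jl})\in\mathbb{C}^{4\times4}$ be Hermitian and $\varepsilon\in\{1,-1\}$. If $\max\{p(\theta_1,\theta_2)^2-q(\theta_1,\theta_2):\theta_1,\theta_2\in(-\pi,\pi]\}=0$, then $S$ is diagonal, $S=\operatorname{diag}(s_{11},s_{22},s_{33},s_{44})$, and $s_{11}+s_{22}-s_{33}-s_{44}=0$.
   Context: Let $S=(s_{jl})_{j,l=1}^4$ be a Hermitian $4\times4$ complex matrix (so $s_{jj}\in\mathbb{R}$ and $s_{lj}=\overline{s_{jl}}$) and $\varepsilon\in\{1,-1\}$. For $\theta_1,\theta_2\in\mathbb{R}$ define $$p=-\tfrac12\Big[s_{11}+s_{22}+s_{33}+s_{44}+2\varepsilon\operatorname{Re}(s_{12}\mathrm{e}^{i\theta_1})+2\varepsilon\operatorname{Re}(s_{34}\mathrm{e}^{i\theta_2})\Big],$$ $$\begin{aligned}q={}&-\big(|s_{13}|^2-s_{11}s_{33}+|s_{14}|^2-s_{11}s_{44}+|s_{23}|^2-s_{22}s_{33}+|s_{24}|^2-s_{22}s_{44}\big)\\&-2\varepsilon\Big[-(s_{33}+s_{44})\operatorname{Re}(s_{12}\mathrm{e}^{i\theta_1})+\operatorname{Re}\big((s_{13}\overline{s_{23}}+s_{14}\overline{s_{24}})\mathrm{e}^{i\theta_1}\big)\\&\qquad-(s_{11}+s_{22})\operatorname{Re}(s_{34}\mathrm{e}^{i\theta_2})+\operatorname{Re}\big((\overline{s_{13}}s_{14}+\overline{s_{23}}s_{24})\mathrm{e}^{i\theta_2}\big)\Big]\\&-2\operatorname{Re}\big((s_{14}\overline{s_{23}}-s_{12}s_{34})\mathrm{e}^{i(\theta_1+\theta_2)}\big)-2\operatorname{Re}\big((s_{13}\overline{s_{24}}-s_{12}\overline{s_{34}})\mathrm{e}^{i(\theta_1-\theta_2)}\big).\end{aligned}$$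 *)

theory Defs
  imports Complex_Main
begin

definition hermitian4 :: "(nat \<Rightarrow> nat \<Rightarrow> complex) \<Rightarrow> bool" where
  "hermitian4 s \<longleftrightarrow> (\<forall>j\<in>{1..4}. \<forall>l\<in>{1..4}. s l j = cnj (s j l))"

definition diagonal4 :: "(nat \<Rightarrow> nat \<Rightarrow> complex) \<Rightarrow> bool" where
  "diagonal4 s \<longleftrightarrow> (\<forall>j\<in>{1..4}. \<forall>l\<in>{1..4}. j \<noteq> l \<longrightarrow> s j l = 0)"

text \<open>The function p(theta1, theta2). Diagonal entries are real (Hermitian), so we take Re.\<close>
definition pfun :: "(nat \<Rightarrow> nat \<Rightarrow> complex) \<Rightarrow> real \<Rightarrow> real \<Rightarrow> real \<Rightarrow> real" where
  "pfun s \<epsilon> t1 t2 = - (1/2) * (Re (s 1 1) + Re (s 2 2) + Re (s 3 3) + Re (s 4 4)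
      + 2 * \<epsilon> * Re (s 1 2 * cis t1) + 2 * \<epsilon> * Re (s 3 4 * cis t2))"

definition qfun :: "(nat \<Rightarrow> nat \<Rightarrow> complex) \<Rightarrow> real \<Rightarrow> real \<Rightarrow> real \<Rightarrow> real" where
  "qfun s \<epsilon> t1 t2 =
     - ((cmod (s 1 3))\<^sup>2 - Re (s 1 1) * Re (s 3 3) + (cmod (s 1 4))\<^sup>2 - Re (s 1 1) * Re (s 4 4)
        + (cmod (s 2 3))\<^sup>2 - Re (s 2 2) * Re (s 3 3) + (cmod (s 2 4))\<^sup>2 - Re (s 2 2) * Re (s 4 4))
     - 2 * \<epsilon> * ( - (Re (s 3 3) + Re (s 4 4)) * Re (s 1 2 * cis t1)
        + Re ((s 1 3 * cnj (s 2 3) + s 1 4 * cnj (s 2 4)) * cis t1)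
        - (Re (s 1 1) + Re (s 2 2)) * Re (s 3 4 * cis t2)
        + Re ((cnj (s 1 3) * s 1 4 + cnj (s 2 3) * s 2 4) * cis t2))
     - 2 * Re ((s 1 4 * cnj (s 2 3) - s 1 2 * s 3 4) * cis (t1 + t2))
     - 2 * Re ((s 1 3 * cnj (s 2 4) - s 1 2 * cnj (s 3 4)) * cis (t1 - t2))"

end

theory Submission
  imports Defs
begin

lemma key:
  fixes a11 a22 a33 a44 e :: real and z12 z34 z13 z14 z23 z24 c1 c2 :: complex
  assumes "c1 \<in> {1, -1, \<i>}" "c2 \<in> {1, -1, \<i>}" "e \<in> {1, -1}"
  shows "(- (1/2) * (a11+a22+a33+a44 + 2*e*Re(z12*c1) + 2*e*Re(z34*c2)))^2 -
   (- ((cmod z13)\<^sup>2 - a11*a33 + (cmod z14)\<^sup>2 - a11*a44 + (cmod z23)\<^sup>2 - a22*a33 + (cmod z24)\<^sup>2 - a22*a44)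
     - 2 * e * ( - (a33 + a44) * Re (z12 * c1)
        + Re ((z13 * cnj z23 + z14 * cnj z24) * c1)
        - (a11 + a22) * Re (z34 * c2)
        + Re ((cnj z13 * z14 + cnj z23 * z24) * c2))
     - 2 * Re ((z14 * cnj z23 - z12 * z34) * (c1*c2))
     - 2 * Re ((z13 * cnj z24 - z12 * cnj z34) * (c1 * cnj c2)))
  = ((a11+a22 + 2*e*Re(z12*c1)) - (a33+a44+2*e*Re(z34*c2)))^2/4
    + (cmod (z13 + e * cnj c1 * z23 + e * c2 * z14 + cnj c1 * c2 * z24))^2"
  using assms unfolding cmod_power2
  by (auto simp: power2_eq_square) (simp_all add: field_simps)

lemma cis_diff': "cis (a - b) = cis a * cnj (cis b)"
  by (simp add: cis_cnj cis_mult)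

lemma point:
  fixes s :: "nat \<Rightarrow> nat \<Rightarrow> complex" and e t1 t2 :: real
  assumes "cis t1 \<in> {1, -1, \<i>}" "cis t2 \<in> {1, -1, \<i>}" "e \<in> {1, -1}"
    and le: "(pfun s e t1 t2)\<^sup>2 - qfun s e t1 t2 \<le> 0"
  shows "Re (s 1 1) + Re (s 2 2) + 2*e*Re(s 1 2 * cis t1) = Re (s 3 3) + Re (s 4 4) + 2*e*Re(s 3 4 * cis t2)
     \<and> s 1 3 + e * cnj (cis t1) * s 2 3 + e * cis t2 * s 1 4 + cnj (cis t1) * cis t2 * s 2 4 = 0"
proof -
  have eq: "(pfun s e t1 t2)\<^sup>2 - qfun s e t1 t2 =
     ((Re (s 1 1) + Re (s 2 2) + 2*e*Re(s 1 2 * cis t1)) - (Re (s 3 3) + Re (s 4 4) + 2*e*Re(s 3 4 * cis t2)))^2/4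
    + (cmod (s 1 3 + e * cnj (cis t1) * s 2 3 + e * cis t2 * s 1 4 + cnj (cis t1) * cis t2 * s 2 4))^2"
    unfolding pfun_def qfun_def cis_mult[symmetric] cis_diff'
    by (rule key[OF assms(1-3)])
  define X where "X = (Re (s 1 1) + Re (s 2 2) + 2*e*Re(s 1 2 * cis t1)) - (Re (s 3 3) + Re (s 4 4) + 2*e*Re(s 3 4 * cis t2))"
  define B where "B = s 1 3 + e * cnj (cis t1) * s 2 3 + e * cis t2 * s 1 4 + cnj (cis t1) * cis t2 * s 2 4"
  have le2: "X^2/4 + (cmod B)^2 \<le> 0" using le unfolding eq X_def B_def .
  have a1: "X^2/4 \<ge> 0" by simp
  have a2: "(cmod B)^2 \<ge> 0" by simp
  have "X^2 = 0" using le2 a1 a2 by linarith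
  hence "X = 0" by simp
  moreover have "(cmod B)^2 = 0" using le2 a1 a2 by linarith
  hence "B = 0" by simp
  ultimately show ?thesis unfolding X_def B_def by simp
qed

theorem mainTheorem12:
  fixes s :: "nat \<Rightarrow> nat \<Rightarrow> complex" and \<epsilon> :: real
  assumes herm: "hermitian4 s"
    and eps: "\<epsilon> \<in> {1, -1}"
    and max_attained: "\<exists>t1\<in>{-pi<..pi}. \<exists>t2\<in>{-pi<..pi}.
                         (pfun s \<epsilon> t1 t2)\<^sup>2 - qfun s \<epsilon> t1 t2 = 0"
    and max_bound: "\<forall>t1\<in>{-pi<..pi}. \<forall>t2\<in>{-pi<..pi}.
                         (pfun s \<epsilon> t1 t2)\<^sup>2 - qfun s \<epsilon> t1 t2 \<le> 0"
  shows "diagonal4 s \<and> s 1 1 + s 2 2 - s 3 3 - s 4 4 = 0"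
proof -
  have P: "\<And>t1 t2. t1 \<in> {0, pi, pi/2} \<Longrightarrow> t2 \<in> {0, pi, pi/2} \<Longrightarrow>
     Re (s 1 1) + Re (s 2 2) + 2*\<epsilon>*Re(s 1 2 * cis t1) = Re (s 3 3) + Re (s 4 4) + 2*\<epsilon>*Re(s 3 4 * cis t2)
     \<and> s 1 3 + \<epsilon> * cnj (cis t1) * s 2 3 + \<epsilon> * cis t2 * s 1 4 + cnj (cis t1) * cis t2 * s 2 4 = 0"
  proof -
    fix t1 t2 :: real
    assume a: "t1 \<in> {0, pi, pi/2}" "t2 \<in> {0, pi, pi/2}"
    have r: "t \<in> {-pi<..pi}" if "t \<in> {0, pi, pi/2}" for t
      using that pi_gt_zero by (auto; linarith)
    have c: "cis t \<in> {1, -1, \<i>}" if "t \<in> {0, pi, pi/2}" for t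
      using that by (metis cis_zero cis_pi cis_pi_half insertE insertI1 insertI2 empty_iff)
    show "?thesis t1 t2"
      by (rule point[OF c[OF a(1)] c[OF a(2)] eps]) (use max_bound r a in blast)
  qed
  have e2: "\<epsilon> \<noteq> 0" using eps by auto
  note pp = P[of 0 0, simplified] P[of pi 0, simplified] P[of "pi/2" 0, simplified]
    P[of 0 pi, simplified] P[of 0 "pi/2", simplified] P[of pi pi, simplified]
  have z12: "s 1 2 = 0" and z34: "s 3 4 = 0"
    using pp e2 by (auto simp: algebra_simps complex_eq_iff)
  have K: "Re (s 1 1) + Re (s 2 2) = Re (s 3 3) + Re (s 4 4)"
    using pp(1) z12 z34 by simp
  have z13: "s 1 3 = 0" and z14: "s 1 4 = 0" and z23: "s 2 3 = 0" and z24: "s 2 4 = 0"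
    using pp(1) pp(2) pp(4) pp(6) eps by (auto simp: algebra_simps complex_eq_iff)
  have H: "\<And>j l. j \<in> {1..4} \<Longrightarrow> l \<in> {1..4} \<Longrightarrow> s l j = cnj (s j l)"
    using herm unfolding hermitian4_def by blast
  have I: "Im (s j j) = 0" if "j \<in> {1..4}" for j
    using H[OF that that] by (simp add: complex_eq_iff)
  have "diagonal4 s"
    unfolding diagonal4_def
  proof (intro ballI impI)
    fix j l :: nat assume j: "j \<in> {1..4}" and l: "l \<in> {1..4}" and ne: "j \<noteq> l"
    have "j = 1 \<or> j = 2 \<or> j = 3 \<or> j = 4" "l = 1 \<or> l = 2 \<or> l = 3 \<or> l = 4" using j l by auto
    then show "s j l = 0" using ne z12 z34 z13 z14 z23 z24
      H[of 1 2] H[of 3 4] H[of 1 3] H[of 1 4] H[of 2 3] H[of 2 4] by auto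
  qed
  moreover have "s 1 1 + s 2 2 - s 3 3 - s 4 4 = 0"
    using K I[of 1] I[of 2] I[of 3] I[of 4] by (simp add: complex_eq_iff)
  ultimately show ?thesis ..
qed

end
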